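(* Assume the user paths are pairwise edge-disjoint, and let $a\ge2$ be an integer. Let $E^*$ be an $s$-$t$ path maximizing $\Lambda(\cdot,P)$ over all directed $s$-$t$ paths, with $d$ edges. If $I\ge\lceil\log_ad\rceil$, the Generalized Recursive Greedy algorithm returns an $s$-$t$ path $E_{\mathbf{f}}$ with $\Lambda(E_{\mathbf{f}},P)\ge\frac{1}{\lceil\log_ad\rceil+1}\Lambda(E^*,P)$.
   Context: $G=(V,E)$ is a simple directed acyclic graph with capacities $C\in\mathbb{R}_{\ge0}^E$, $s,t\in V$ joined by a directed path, budget $0<\gamma\le\min_eC(e)$. User paths $P=\{p_1,\dots,p_k\}$ are directed paths (edge sets) with initial values $\lambda_i\ge0$, $\sum_{i:e\in p_i}\lambda_i\le C(e)$. For $A\subseteq E$, $T(A,P)$ is the optimal value of: maximize $\sum_i\tilde\lambda_i$ s.t. $\sum_{i:e\in p_i}\tilde\lambda_i\le C(e)-\gamma\mathbf{1}_{\{e\in A\}}$ for all $e$, $0\le\tilde\lambda_i\le\lambda_i$; $\Lambda(A,P)=\sum_i\lambda_i-T(A,P)$ and $\Lambda_X(A,P)=\Lambda(A\cup X,P)-\Lambda(X,P)$. Generalized Recursive Greedy algorithm with parameter $a$: the procedure $RG(u_1,u_2,X,i)$ lets $S$ be a shortest (fewest edges) directed $u_1$-$u_2$ path, returns "infeasible" if none exists, returns $S$ if $i=0$, and otherwise sets $best:=S$, $r:=\Lambda_X(S,P)$ and, for every tuple $(v_1,\dots,v_{a-1})\in V^{a-1}$, computes sequentially $Q_1=RG(u_1,v_1,X,i-1)$,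 $Q_2=RG(v_1,v_2,X\cup Q_1,i-1)$, …, $Q_a=RG(v_{a-1},u_2,X\cup Q_1\cup\dots\cup Q_{a-1},i-1)$ (skipping the tuple if any call is infeasible), and if $\Lambda_X(Q_1\cup\dots\cup Q_a,P)>r$ sets $r$ to this value and $best:=Q_1\cup\dots\cup Q_a$; it returns $best$. The algorithm outputs $RG(s,t,\emptyset,I)$. *)

theory Defs
  imports Complex_Main
begin

type_synonym 'v edge = "'v \<times> 'v"

definition dwalk :: "'v set \<Rightarrow> 'v edge set \<Rightarrow> 'v \<Rightarrow> 'v \<Rightarrow> 'v list \<Rightarrow> bool" where
  "dwalk V E u v xs \<longleftrightarrow> xs \<noteq> [] \<and> hd xs = u \<and> last xs = v \<and> set xs \<subseteq> V \<and>
     (\<forall>j. Suc j < length xs \<longrightarrow> (xs ! j, xs ! Suc j) \<in> E)"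

definition edges_of :: "'v list \<Rightarrow> 'v edge set" where
  "edges_of xs = set (zip xs (tl xs))"

definition is_path :: "'v set \<Rightarrow> 'v edge set \<Rightarrow> 'v \<Rightarrow> 'v \<Rightarrow> 'v edge set \<Rightarrow> bool" where
  "is_path V E u v S \<longleftrightarrow> (\<exists>xs. dwalk V E u v xs \<and> S = edges_of xs)"

definition is_shortest_path :: "'v set \<Rightarrow> 'v edge set \<Rightarrow> 'v \<Rightarrow> 'v \<Rightarrow> 'v edge set \<Rightarrow> bool" where
  "is_shortest_path V E u v S \<longleftrightarrow> is_path V E u v S \<and>
     (\<forall>S'. is_path V E u v S' \<longrightarrow> card S \<le> card S')"

definition Tval :: "'v edge set \<Rightarrow> ('v edge \<Rightarrow> real) \<Rightarrow> real \<Rightarrow> (nat \<Rightarrow> 'v edge set)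
     \<Rightarrow> (nat \<Rightarrow> real) \<Rightarrow> nat \<Rightarrow> 'v edge set \<Rightarrow> real" where
  "Tval E C \<gamma> p lam k A = Sup {(\<Sum>i<k. x i) | x.
      (\<forall>i<k. 0 \<le> x i \<and> x i \<le> lam i) \<and>
      (\<forall>e\<in>E. (\<Sum>i\<in>{i. i < k \<and> e \<in> p i}. x i) \<le> C e - (if e \<in> A then \<gamma> else 0))}"

definition Lam :: "'v edge set \<Rightarrow> ('v edge \<Rightarrow> real) \<Rightarrow> real \<Rightarrow> (nat \<Rightarrow> 'v edge set)
     \<Rightarrow> (nat \<Rightarrow> real) \<Rightarrow> nat \<Rightarrow> 'v edge set \<Rightarrow> real" where
  "Lam E C \<gamma> p lam k A = (\<Sum>i<k. lam i) - Tval E C \<gamma> p lam k A"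

definition LamX :: "'v edge set \<Rightarrow> ('v edge \<Rightarrow> real) \<Rightarrow> real \<Rightarrow> (nat \<Rightarrow> 'v edge set)
     \<Rightarrow> (nat \<Rightarrow> real) \<Rightarrow> nat \<Rightarrow> 'v edge set \<Rightarrow> 'v edge set \<Rightarrow> real" where
  "LamX E C \<gamma> p lam k X A = Lam E C \<gamma> p lam k (A \<union> X) - Lam E C \<gamma> p lam k X"

fun chain :: "('v \<Rightarrow> 'v \<Rightarrow> 'v edge set \<Rightarrow> 'v edge set option) \<Rightarrow> 'v list \<Rightarrow> 'v edge set
     \<Rightarrow> 'v edge set option" where
  "chain rc [] Y = Some {}"
| "chain rc [w] Y = Some {}"
| "chain rc (w1 # w2 # ws) Y =
     (case rc w1 w2 Y of None \<Rightarrow> None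
      | Some Q \<Rightarrow> (case chain rc (w2 # ws) (Y \<union> Q) of None \<Rightarrow> None
                   | Some R \<Rightarrow> Some (Q \<union> R)))"

text \<open>Generalized Recursive Greedy.  sp u1 u2 X i is the (arbitrary, tie-broken) shortest
  path chosen by the call RG(u1,u2,X,i), tups is the order in which the tuples of V^(a-1)
  are enumerated, LX X A = Lambda_X(A,P).  None means "infeasible".\<close>
primrec RG :: "('v \<Rightarrow> 'v \<Rightarrow> 'v edge set \<Rightarrow> nat \<Rightarrow> 'v edge set option) \<Rightarrow> 'v list list
     \<Rightarrow> ('v edge set \<Rightarrow> 'v edge set \<Rightarrow> real) \<Rightarrow> nat \<Rightarrow> 'v \<Rightarrow> 'v \<Rightarrow> 'v edge set
     \<Rightarrow> 'v edge set option" where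
  "RG sp tups LX 0 u1 u2 X = sp u1 u2 X 0"
| "RG sp tups LX (Suc i) u1 u2 X =
     (case sp u1 u2 X (Suc i) of None \<Rightarrow> None
      | Some S \<Rightarrow> Some (fst (foldl (\<lambda>(best, r) vs.
            (case chain (\<lambda>w1 w2 Y. RG sp tups LX i w1 w2 Y) (u1 # vs @ [u2]) X of
               None \<Rightarrow> (best, r)
             | Some Q \<Rightarrow> (if LX X Q > r then (Q, LX X Q) else (best, r))))
          (S, LX X S) tups)))"

end

theory Submission
  imports Defs
begin


lemma edges_of_Nil[simp]: "edges_of [] = {}" by (simp add: edges_of_def)
lemma edges_of_single[simp]: "edges_of [x] = {}" by (simp add: edges_of_def)
lemma edges_of_Cons2[simp]: "edges_of (x # y # zs) = insert (x, y) (edges_of (y # zs))"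
  by (simp add: edges_of_def)

lemma edges_app: "xs \<noteq> [] \<Longrightarrow> ys \<noteq> [] \<Longrightarrow> last xs = hd ys \<Longrightarrow>
   edges_of (xs @ tl ys) = edges_of xs \<union> edges_of ys"
proof (induction xs)
  case Nil then show ?case by simp
next
  case (Cons x xs)
  then show ?case
  proof (cases xs)
    case Nil
    with Cons show ?thesis by (cases ys) auto
  next
    case (Cons y xs')
    with Cons.IH Cons.prems show ?thesis by auto
  qed
qed

lemma edges_of_nth: "edges_of xs = {(xs!j, xs!Suc j) | j. Suc j < length xs}"
  by (auto simp: edges_of_def set_zip nth_tl)

lemma dwalk_iff: "dwalk V E u v xs \<longleftrightarrow> xs \<noteq> [] \<and> hd xs = u \<and> last xs = v \<and> set xs \<subseteq> V \<and> edges_of xs \<subseteq> E"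
  by (auto simp: dwalk_def edges_of_nth)

lemma dwalk_app: "dwalk V E u v xs \<Longrightarrow> dwalk V E v w ys \<Longrightarrow>
   dwalk V E u w (xs @ tl ys) \<and> edges_of (xs @ tl ys) = edges_of xs \<union> edges_of ys"
proof -
  assume a1: "dwalk V E u v xs" and a2: "dwalk V E v w ys"
  have e: "edges_of (xs @ tl ys) = edges_of xs \<union> edges_of ys"
    using a1 a2 by (intro edges_app) (auto simp: dwalk_iff)
  have l: "last (xs @ tl ys) = w"
  proof (cases "tl ys = []")
    case True
    with a2 have "ys = [v]" unfolding dwalk_iff by (cases ys) auto
    with a1 a2 True show ?thesis by (auto simp: dwalk_iff)
  next
    case False
    with a2 show ?thesis unfolding dwalk_iff by (cases ys) auto
  qed
  have "set (tl ys) \<subseteq> set ys" by (cases ys) auto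
  with a1 a2 e l show ?thesis by (auto simp: dwalk_iff)
qed

lemma path_app: "is_path V E u v A \<Longrightarrow> is_path V E v w B \<Longrightarrow> is_path V E u w (A \<union> B)"
  unfolding is_path_def using dwalk_app by metis

lemma path_refl: "u \<in> V \<Longrightarrow> is_path V E u u {}"
  unfolding is_path_def by (rule exI[of _ "[u]"]) (auto simp: dwalk_iff)

lemma path_V: "is_path V E u v A \<Longrightarrow> u \<in> V \<and> v \<in> V \<and> A \<subseteq> E"
  unfolding is_path_def dwalk_iff by (metis hd_in_set last_in_set subsetD)

lemma walk_trancl: "dwalk V E u v xs \<Longrightarrow> i < j \<Longrightarrow> j < length xs \<Longrightarrow> (xs!i, xs!j) \<in> E\<^sup>+"
proof (induction j)
  case 0 then show ?case by simp
next
  case (Suc j)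
  have e: "(xs!j, xs!Suc j) \<in> E" using Suc.prems unfolding dwalk_def by auto
  show ?case
  proof (cases "i = j")
    case True then show ?thesis using e by auto
  next
    case False
    then have "(xs!i, xs!j) \<in> E\<^sup>+" using Suc by auto
    then show ?thesis using e by (rule trancl_into_trancl)
  qed
qed

lemma walk_distinct: "acyclic E \<Longrightarrow> dwalk V E u v xs \<Longrightarrow> distinct xs"
proof -
  assume ac: "acyclic E" and w: "dwalk V E u v xs"
  have "xs ! i \<noteq> xs ! j" if "i < j" "j < length xs" for i j
    using walk_trancl[OF w that] ac unfolding acyclic_def by metis
  then show ?thesis unfolding distinct_conv_nth by (metis linorder_neqE_nat)
qed

lemma card_edges: "distinct xs \<Longrightarrow> card (edges_of xs) = length xs - 1"
  unfolding edges_of_def by (subst distinct_card) (auto intro: distinct_zipI1)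


locale setting =
  fixes V :: "'v set" and E :: "'v edge set" and C :: "'v edge \<Rightarrow> real" and \<gamma> :: real
    and k :: nat and p :: "nat \<Rightarrow> 'v edge set" and lam :: "nat \<Rightarrow> real"
  assumes finV: "finite V" and EV: "E \<subseteq> V \<times> V"
    and gam: "0 < \<gamma>" "\<forall>e\<in>E. \<gamma> \<le> C e"
    and users: "\<forall>i<k. \<exists>u v. is_path V E u v (p i)"
    and lamnn: "\<forall>i<k. 0 \<le> lam i"
    and cap: "\<forall>e\<in>E. (\<Sum>i\<in>{i. i < k \<and> e \<in> p i}. lam i) \<le> C e"
    and disj: "\<forall>i<k. \<forall>j<k. i \<noteq> j \<longrightarrow> p i \<inter> p j = {}"
begin

abbreviation L where "L \<equiv> Lam E C \<gamma> p lam k"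

definition w :: "nat \<Rightarrow> 'v edge \<Rightarrow> 'v edge set \<Rightarrow> real" where
  "w i e A = lam i - C e + (if e \<in> A then \<gamma> else 0)"

definition F :: "nat \<Rightarrow> 'v edge set \<Rightarrow> real" where
  "F i A = Max (insert 0 ((\<lambda>e. w i e A) ` p i))"

lemma finE: "finite E"
proof -
  have "finite (V \<times> V)" using finV by simp
  then show ?thesis using EV by (rule finite_subset[rotated])
qed

lemma pE: "i < k \<Longrightarrow> p i \<subseteq> E"
proof -
  assume "i < k"
  then obtain u v where "is_path V E u v (p i)" using users by meson
  from path_V[OF this] show ?thesis by (elim conjE)
qed

lemma finp: "i < k \<Longrightarrow> finite (p i)"
  using pE finE by (rule finite_subset)

lemma users_at: "i < k \<Longrightarrow> e \<in> p i \<Longrightarrow> {j. j < k \<and> e \<in> p j} = {i}"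
proof -
  assume i: "i < k" and e: "e \<in> p i"
  have "j = i" if "j < k" "e \<in> p j" for j
  proof (rule ccontr)
    assume "j \<noteq> i"
    then have "p i \<inter> p j = {}" using disj i that(1) by blast
    then show False using e that(2) by blast
  qed
  then show ?thesis using i e by blast
qed

lemma lam_le_C: "i < k \<Longrightarrow> e \<in> p i \<Longrightarrow> lam i \<le> C e"
proof -
  assume i: "i < k" and e: "e \<in> p i"
  have "e \<in> E" using pE[OF i] e by blast
  then have "(\<Sum>j\<in>{j. j < k \<and> e \<in> p j}. lam j) \<le> C e" using cap by blast
  then show ?thesis unfolding users_at[OF i e] by simp
qed

lemma F_ge: "i < k \<Longrightarrow> e \<in> p i \<Longrightarrow> w i e A \<le> F i A"
  unfolding F_def by (rule Max_ge) (auto simp: finp)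

lemma F_nn: "i < k \<Longrightarrow> 0 \<le> F i A"
  unfolding F_def by (rule Max_ge) (auto simp: finp)

lemma F_le_iff: "i < k \<Longrightarrow> F i A \<le> y \<longleftrightarrow> 0 \<le> y \<and> (\<forall>e\<in>p i. w i e A \<le> y)"
  unfolding F_def by (subst Max_le_iff) (auto simp: finp)

lemma F_le_lam: "i < k \<Longrightarrow> F i A \<le> lam i"
proof -
  assume i: "i < k"
  have "\<forall>e\<in>p i. w i e A \<le> lam i"
  proof
    fix e assume e: "e \<in> p i"
    have "\<gamma> \<le> C e" using gam(2) pE[OF i] e by blast
    then show "w i e A \<le> lam i" using gam(1) by (auto simp: w_def)
  qed
  then show ?thesis using F_le_iff[OF i] lamnn i by blast
qed

lemma Tval_eq: "Tval E C \<gamma> p lam k A = (\<Sum>i<k. lam i - F i A)"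
  unfolding Tval_def
proof (rule cSup_eq_maximum)
  let ?h = "\<lambda>i. lam i - F i A"
  have feas: "(\<forall>i<k. 0 \<le> ?h i \<and> ?h i \<le> lam i) \<and>
      (\<forall>e\<in>E. (\<Sum>i\<in>{i. i < k \<and> e \<in> p i}. ?h i) \<le> C e - (if e \<in> A then \<gamma> else 0))"
  proof (intro conjI allI impI ballI)
    fix i assume "i < k" then show "0 \<le> ?h i" "?h i \<le> lam i" using F_le_lam F_nn by auto
  next
    fix e assume e: "e \<in> E"
    show "(\<Sum>i\<in>{i. i < k \<and> e \<in> p i}. ?h i) \<le> C e - (if e \<in> A then \<gamma> else 0)"
    proof (cases "\<exists>i0. i0 < k \<and> e \<in> p i0")
      case True
      then obtain i0 where i0: "i0 < k" "e \<in> p i0" by blast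
      have "w i0 e A \<le> F i0 A" using F_ge i0 by blast
      then show ?thesis using users_at[OF i0] by (auto simp: w_def split: if_splits)
    next
      case False
      then have z: "{i. i < k \<and> e \<in> p i} = {}" by blast
      have "(\<Sum>i\<in>{i. i < k \<and> e \<in> p i}. ?h i) = 0" by (simp only: z sum.empty)
      moreover have "\<gamma> \<le> C e" using gam e by blast
      ultimately show ?thesis using gam(1) by simp
    qed
  qed
  then show "(\<Sum>i<k. ?h i) \<in> {\<Sum>i<k. x i |x. (\<forall>i<k. 0 \<le> x i \<and> x i \<le> lam i) \<and>
      (\<forall>e\<in>E. (\<Sum>i\<in>{i. i < k \<and> e \<in> p i}. x i) \<le> C e - (if e \<in> A then \<gamma> else 0))}"
    by blast
  fix y assume "y \<in> {\<Sum>i<k. x i |x. (\<forall>i<k. 0 \<le> x i \<and> x i \<le> lam i) \<and>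
      (\<forall>e\<in>E. (\<Sum>i\<in>{i. i < k \<and> e \<in> p i}. x i) \<le> C e - (if e \<in> A then \<gamma> else 0))}"
  then obtain x where y: "y = (\<Sum>i<k. x i)" and x1: "\<forall>i<k. 0 \<le> x i \<and> x i \<le> lam i"
    and x2: "\<forall>e\<in>E. (\<Sum>i\<in>{i. i < k \<and> e \<in> p i}. x i) \<le> C e - (if e \<in> A then \<gamma> else 0)"
    by blast
  have "x i \<le> ?h i" if i: "i < k" for i
  proof -
    have "\<forall>e\<in>p i. w i e A \<le> lam i - x i"
    proof
      fix e assume e: "e \<in> p i"
      have "e \<in> E" using pE[OF i] e by blast
      then have "(\<Sum>j\<in>{j. j < k \<and> e \<in> p j}. x j) \<le> C e - (if e \<in> A then \<gamma> else 0)"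
        using x2 by blast
      then have "x i \<le> C e - (if e \<in> A then \<gamma> else 0)"
        unfolding users_at[OF i e] by simp
      then show "w i e A \<le> lam i - x i" by (auto simp: w_def)
    qed
    then have "F i A \<le> lam i - x i" using x1 i by (subst F_le_iff) auto
    then show ?thesis by simp
  qed
  then show "y \<le> (\<Sum>i<k. ?h i)" unfolding y by (intro sum_mono) auto
qed

lemma L_eq: "L A = (\<Sum>i<k. F i A)"
  unfolding Lam_def Tval_eq by (simp add: sum_subtractf)

lemma F_mono: "i < k \<Longrightarrow> A \<subseteq> B \<Longrightarrow> F i A \<le> F i B"
proof -
  assume i: "i < k" and AB: "A \<subseteq> B"
  have "\<forall>e\<in>p i. w i e A \<le> F i B"
  proof
    fix e assume e: "e \<in> p i"
    have "w i e A \<le> w i e B" using AB gam(1) by (auto simp: w_def)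
    then show "w i e A \<le> F i B" using F_ge[OF i e, of B] by linarith
  qed
  then show ?thesis using F_nn[OF i] F_le_iff[OF i] by blast
qed

lemma F_un: "i < k \<Longrightarrow> F i (A \<union> B) \<le> max (F i A) (F i B)"
proof -
  assume i: "i < k"
  have "\<forall>e\<in>p i. w i e (A \<union> B) \<le> max (F i A) (F i B)"
  proof
    fix e assume e: "e \<in> p i"
    have "w i e (A \<union> B) = w i e A \<or> w i e (A \<union> B) = w i e B" by (auto simp: w_def)
    then show "w i e (A \<union> B) \<le> max (F i A) (F i B)"
      using F_ge[OF i e, of A] F_ge[OF i e, of B] by linarith
  qed
  moreover have "0 \<le> max (F i A) (F i B)" using F_nn[OF i, of A] by (simp add: le_max_iff_disj)
  ultimately show ?thesis using F_le_iff[OF i] by blast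
qed

lemma L_mono: "A \<subseteq> B \<Longrightarrow> L A \<le> L B"
  unfolding L_eq by (intro sum_mono F_mono) auto

lemma L_empty: "L {} = 0"
proof -
  have "F i {} = 0" if i: "i < k" for i
  proof -
    have "\<forall>e\<in>p i. w i e {} \<le> 0" using lam_le_C[OF i] by (auto simp: w_def)
    then have "F i {} \<le> 0" using F_le_iff[OF i] by simp
    then show ?thesis using F_nn[OF i, of "{}"] by linarith
  qed
  then show ?thesis unfolding L_eq by simp
qed

lemma L_submod: "L (A \<union> B) + L (A \<inter> B) \<le> L A + L B"
proof -
  have "F i (A \<union> B) + F i (A \<inter> B) \<le> F i A + F i B" if "i < k" for i
    using F_un[OF that, of A B] F_mono[OF that Int_lower1, of A B] F_mono[OF that Int_lower2, of A B]
    by (auto simp: max_def split: if_splits)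
  then have "(\<Sum>i<k. F i (A \<union> B) + F i (A \<inter> B)) \<le> (\<Sum>i<k. F i A + F i B)"
    by (intro sum_mono) auto
  then show ?thesis unfolding L_eq by (simp add: sum.distrib)
qed

lemma L_DR: "Y \<subseteq> Y' \<Longrightarrow> L (A \<union> Y') - L Y' \<le> L (A \<union> Y) - L Y"
proof -
  assume Y: "Y \<subseteq> Y'"
  have e1: "(A \<union> Y) \<union> Y' = A \<union> Y'" using Y by blast
  have "L Y \<le> L ((A \<union> Y) \<inter> Y')" using Y by (intro L_mono) blast
  then show ?thesis using L_submod[of "A \<union> Y" Y', unfolded e1] by linarith
qed

lemma L_SA: "L (A \<union> B \<union> Y) - L Y \<le> (L (A \<union> Y) - L Y) + (L (B \<union> Y) - L Y)"
proof -
  have e1: "(A \<union> Y) \<union> (B \<union> Y) = A \<union> B \<union> Y" by blast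
  have "L Y \<le> L ((A \<union> Y) \<inter> (B \<union> Y))" by (intro L_mono) blast
  then show ?thesis using L_submod[of "A \<union> Y" "B \<union> Y", unfolded e1] by linarith
qed

end



lemma foldl_best:
  fixes g :: "'b \<Rightarrow> 'a option" and F :: "'a \<Rightarrow> real"
  shows "P b0 \<Longrightarrow> (\<forall>vs\<in>set l. \<forall>Q. g vs = Some Q \<longrightarrow> P Q) \<Longrightarrow>
   (let res = foldl (\<lambda>(best, r) vs. case g vs of None \<Rightarrow> (best, r)
        | Some Q \<Rightarrow> (if F Q > r then (Q, F Q) else (best, r))) (b0, F b0) l
    in P (fst res) \<and> F b0 \<le> F (fst res) \<and> (\<forall>vs\<in>set l. \<forall>Q. g vs = Some Q \<longrightarrow> F Q \<le> F (fst res)))"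
proof (induction l arbitrary: b0)
  case Nil then show ?case by simp
next
  case (Cons v l)
  show ?case
  proof (cases "g v")
    case None
    then show ?thesis using Cons.IH[of b0] Cons.prems by (simp add: Let_def)
  next
    case (Some Q)
    show ?thesis
    proof (cases "F Q > F b0")
      case True
      then show ?thesis using Cons.IH[of Q] Cons.prems Some by (auto simp add: Let_def)
    next
      case False
      then show ?thesis using Cons.IH[of b0] Cons.prems Some by (auto simp add: Let_def)
    qed
  qed
qed

lemma chain_path: "(\<forall>w1 w2 Y R. rc w1 w2 Y = Some R \<longrightarrow> is_path V E w1 w2 R) \<Longrightarrow>
  chain rc (w1 # w2 # ws) Y = Some Q \<Longrightarrow> is_path V E w1 (last (w2 # ws)) Q"
proof (induction ws arbitrary: w1 w2 Y Q)
  case Nil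
  then show ?case by (auto split: option.splits)
next
  case (Cons w3 ws)
  from Cons.prems(2) obtain Q1 R where q1: "rc w1 w2 Y = Some Q1"
    and r: "chain rc (w2 # w3 # ws) (Y \<union> Q1) = Some R" and q: "Q = Q1 \<union> R"
    by (auto split: option.splits)
  have "is_path V E w2 (last (w3 # ws)) R" using Cons.IH[OF Cons.prems(1) r] .
  moreover have "is_path V E w1 w2 Q1" using Cons.prems(1) q1 by blast
  ultimately show ?case using q path_app by fastforce
qed

inductive spl :: "'v set \<Rightarrow> 'v edge set \<Rightarrow> nat \<Rightarrow> 'v list \<Rightarrow> 'v list \<Rightarrow> bool" for V E b where
  one: "dwalk V E (hd xs) (last xs) xs \<Longrightarrow> length xs \<le> b + 1 \<Longrightarrow> spl V E b xs [hd xs, last xs]"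
| more: "spl V E b ys (w # ws) \<Longrightarrow> dwalk V E (hd xs) (last xs) xs \<Longrightarrow> length xs \<le> b + 1 \<Longrightarrow>
     last xs = w \<Longrightarrow> spl V E b (xs @ tl ys) (hd xs # w # ws)"

lemma spl_hd: "spl V E b xs ws \<Longrightarrow> ws \<noteq> [] \<and> hd ws = hd xs \<and> last ws = last xs \<and>
   set ws \<subseteq> V \<and> dwalk V E (hd xs) (last xs) xs"
proof (induction rule: spl.induct)
  case (one xs)
  then show ?case unfolding dwalk_iff by auto
next
  case (more ys w ws xs)
  have "dwalk V E (hd xs) (last ys) (xs @ tl ys)"
    using dwalk_app[of V E "hd xs" "last xs" xs "last ys" ys] more by auto
  moreover then have "hd (xs @ tl ys) = hd xs" "last (xs @ tl ys) = last ys"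
    unfolding dwalk_iff using more(2) unfolding dwalk_iff by auto
  moreover have "hd xs \<in> V" using more(2) unfolding dwalk_iff by auto
  ultimately show ?case using more by auto
qed

lemma spl_exists: "1 \<le> m \<Longrightarrow> dwalk V E u v xs \<Longrightarrow> length xs \<le> m * b + 1 \<Longrightarrow>
  \<exists>ws. spl V E b xs (u # ws) \<and> length ws = m"
proof (induction m arbitrary: u xs)
  case 0 then show ?case by simp
next
  case (Suc m)
  show ?case
  proof (cases "m = 0")
    case True
    then have "spl V E b xs [hd xs, last xs]" using Suc.prems
      by (intro spl.one) (auto simp: dwalk_iff)
    then show ?thesis using Suc.prems(2) True unfolding dwalk_iff by (intro exI[of _ "[last xs]"]) auto
  next
    case False
    define c where "c = min b (length xs - 1)"
    have ne: "xs \<noteq> []" using Suc.prems(2) by (auto simp: dwalk_iff)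
    then have c: "c < length xs" unfolding c_def by (cases xs) auto
    define pc where "pc = take (c + 1) xs"
    define rs where "rs = drop c xs"
    have app: "pc @ tl rs = xs" unfolding pc_def rs_def by (metis Suc_eq_plus1 append_take_drop_id drop_Suc tl_drop)
    have pcne: "pc \<noteq> []" "rs \<noteq> []" using c unfolding pc_def rs_def by auto
    have lh: "last pc = xs ! c" "hd rs = xs ! c" using c unfolding pc_def rs_def
      by (auto simp: take_Suc_conv_app_nth hd_drop_conv_nth)
    have ed: "edges_of xs = edges_of pc \<union> edges_of rs"
      using edges_app[OF pcne, unfolded lh] app by simp
    have hpc: "hd pc = u" using Suc.prems(2) ne unfolding pc_def dwalk_iff by (cases xs) auto
    have lrs: "last rs = v" using Suc.prems(2) c unfolding rs_def dwalk_iff by auto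
    have "set pc \<subseteq> set xs" "set rs \<subseteq> set xs" unfolding pc_def rs_def
      by (auto dest: in_set_takeD in_set_dropD)
    then have wpc: "dwalk V E u (xs ! c) pc" and wrs: "dwalk V E (xs ! c) v rs"
      using Suc.prems(2) ed pcne lh hpc lrs unfolding dwalk_iff by auto
    have lpc: "length pc \<le> b + 1" unfolding pc_def c_def by simp
    have "length rs \<le> m * b + 1" using Suc.prems(3) unfolding rs_def c_def by (auto simp: min_def)
    then obtain ws where ws: "spl V E b rs (xs ! c # ws)" "length ws = m"
      using Suc.IH[OF _ wrs] False by auto
    have "spl V E b (pc @ tl rs) (hd pc # xs ! c # ws)"
      using wpc lpc lh hpc by (intro spl.more[OF ws(1)]) (auto simp: dwalk_iff)
    then show ?thesis using app hpc ws(2) by (intro exI[of _ "xs ! c # ws"]) auto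
  qed
qed



context setting begin

abbreviation LX where "LX \<equiv> LamX E C \<gamma> p lam k"

lemma LX_eq: "LX X A = L (A \<union> X) - L X" by (simp add: LamX_def)

lemma LX_nn: "0 \<le> LX X A"
proof -
  have "X \<subseteq> A \<union> X" by blast
  then show ?thesis unfolding LX_eq using L_mono by simp
qed

lemma LX_empty: "LX X {} = 0" by (simp add: LX_eq)

lemma LX_DR: "Y \<subseteq> Y' \<Longrightarrow> LX Y' A \<le> LX Y A" unfolding LX_eq by (rule L_DR)

lemma LX_SA: "LX Y (A \<union> B) \<le> LX Y A + LX Y B" unfolding LX_eq using L_SA[of A B Y] by simp

lemma chain_bound:
  assumes sp: "spl V E b xs ws"
   and hyp: "\<forall>Y u1 u2 ys. dwalk V E u1 u2 ys \<longrightarrow> length ys \<le> b + 1 \<longrightarrow>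
      (\<exists>R. rc u1 u2 Y = Some R \<and> is_path V E u1 u2 R \<and> LX Y (edges_of ys) \<le> c * LX Y R)"
  shows "\<exists>Q. chain rc ws Y = Some Q \<and> is_path V E (hd xs) (last xs) Q \<and>
     LX (Y \<union> Q) (edges_of xs) \<le> c * LX Y Q"
  using sp
proof (induction arbitrary: Y rule: spl.induct)
  case (one xs)
  from hyp[rule_format, OF one.hyps, of Y] obtain R where
    R: "rc (hd xs) (last xs) Y = Some R" "is_path V E (hd xs) (last xs) R"
       "LX Y (edges_of xs) \<le> c * LX Y R" by (elim exE conjE)
  have ch: "chain rc [hd xs, last xs] Y = Some R" using R(1) by simp
  have "LX (Y \<union> R) (edges_of xs) \<le> LX Y (edges_of xs)" by (rule LX_DR) blast
  then show ?case using ch R(2,3) by (intro exI[of _ R]) simp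
next
  case (more ys w ws xs)
  from hyp[rule_format, OF more.hyps(2,3), of Y] obtain Q1 where
    Q1: "rc (hd xs) (last xs) Y = Some Q1" "is_path V E (hd xs) (last xs) Q1"
       "LX Y (edges_of xs) \<le> c * LX Y Q1" by (elim exE conjE)
  from more.IH[of "Y \<union> Q1"] obtain R where
    R: "chain rc (w # ws) (Y \<union> Q1) = Some R" "is_path V E (hd ys) (last ys) R"
       "LX (Y \<union> Q1 \<union> R) (edges_of ys) \<le> c * LX (Y \<union> Q1) R" by (elim exE conjE)
  have sh: "hd ys = w" "dwalk V E (hd ys) (last ys) ys" using spl_hd[OF more.hyps(1)] by auto
  have wxs: "dwalk V E (hd xs) w xs" using more.hyps(2,4) by simp
  have da: "dwalk V E (hd xs) (last ys) (xs @ tl ys)" and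
    ea: "edges_of (xs @ tl ys) = edges_of xs \<union> edges_of ys"
    using dwalk_app[OF wxs sh(2)[unfolded sh(1)]] by auto
  have hl: "hd (xs @ tl ys) = hd xs" "last (xs @ tl ys) = last ys" using da by (auto simp: dwalk_iff)
  have ch: "chain rc (hd xs # w # ws) Y = Some (Q1 \<union> R)" using Q1(1) R(1) more.hyps(4) by simp
  have pa: "is_path V E (hd xs) (last ys) (Q1 \<union> R)"
    using path_app[OF Q1(2)[unfolded more.hyps(4)] R(2)[unfolded sh(1)]] .
  have s1: "Y \<union> (Q1 \<union> R) = Y \<union> Q1 \<union> R" by blast
  have b1: "LX (Y \<union> (Q1 \<union> R)) (edges_of xs \<union> edges_of ys) \<le>
      LX (Y \<union> (Q1 \<union> R)) (edges_of xs) + LX (Y \<union> (Q1 \<union> R)) (edges_of ys)" by (rule LX_SA)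
  have b2: "LX (Y \<union> (Q1 \<union> R)) (edges_of xs) \<le> LX Y (edges_of xs)" by (rule LX_DR) blast
  have sp1: "Q1 \<union> R \<union> Y = R \<union> (Y \<union> Q1)" "Q1 \<union> Y = Y \<union> Q1" by blast+
  have b3: "LX Y (Q1 \<union> R) = LX Y Q1 + LX (Y \<union> Q1) R" unfolding LX_eq sp1 by simp
  have "LX (Y \<union> (Q1 \<union> R)) (edges_of (xs @ tl ys)) \<le> c * LX Y (Q1 \<union> R)"
    unfolding ea b3 distrib_left using b1 b2 R(3)[folded s1] Q1(3) by linarith
  then show ?case using ch pa hl by (intro exI[of _ "Q1 \<union> R"]) simp
qed

end

locale alg = setting V E C \<gamma> k p lam for V :: "'v set" and E C \<gamma> k p lam +
  fixes a :: nat and sp :: "'v \<Rightarrow> 'v \<Rightarrow> 'v edge set \<Rightarrow> nat \<Rightarrow> 'v edge set option"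
    and tups :: "'v list list"
  assumes dag: "acyclic E" and a2: "2 \<le> a"
    and sp_none: "\<And>u1 u2 X i. (sp u1 u2 X i = None) \<longleftrightarrow> \<not> (\<exists>S. is_path V E u1 u2 S)"
    and sp_some: "\<And>u1 u2 X i S. sp u1 u2 X i = Some S \<Longrightarrow> is_shortest_path V E u1 u2 S"
    and tupsV: "set tups = {vs. length vs = a - 1 \<and> set vs \<subseteq> V}"
begin

abbreviation RGa where "RGa \<equiv> RG sp tups LX"

lemma RG_path: "RGa i u1 u2 X = Some R \<Longrightarrow> is_path V E u1 u2 R"
proof (induction i arbitrary: u1 u2 X R)
  case 0 then show ?case using sp_some by (auto simp: is_shortest_path_def)
next
  case (Suc i)
  then obtain S where S: "sp u1 u2 X (Suc i) = Some S" by (cases "sp u1 u2 X (Suc i)") auto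
  have ih: "\<forall>w1 w2 Y R. RGa i w1 w2 Y = Some R \<longrightarrow> is_path V E w1 w2 R" using Suc.IH by blast
  have hyp: "\<forall>vs\<in>set tups. \<forall>Q. chain (\<lambda>w1 w2 Y. RGa i w1 w2 Y) (u1 # vs @ [u2]) X = Some Q
      \<longrightarrow> is_path V E u1 u2 Q"
  proof (intro ballI allI impI)
    fix vs Q assume c: "chain (\<lambda>w1 w2 Y. RGa i w1 w2 Y) (u1 # vs @ [u2]) X = Some Q"
    obtain w2 ws where eq: "vs @ [u2] = w2 # ws" by (cases "vs @ [u2]") auto
    have "chain (\<lambda>w1 w2 Y. RGa i w1 w2 Y) (u1 # w2 # ws) X = Some Q" using c eq by simp
    then have "is_path V E u1 (last (w2 # ws)) Q"
      using chain_path[where rc="\<lambda>w1 w2 Y. RGa i w1 w2 Y"] ih by blast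
    moreover have "last (w2 # ws) = u2" using eq by (metis last_snoc)
    ultimately show "is_path V E u1 u2 Q" by simp
  qed
  have ps: "is_path V E u1 u2 S" using sp_some[OF S] by (simp add: is_shortest_path_def)
  from foldl_best[of "is_path V E u1 u2" S tups "\<lambda>vs. chain (\<lambda>w1 w2 Y. RGa i w1 w2 Y) (u1 # vs @ [u2]) X"
     "LX X", OF ps hyp]
  show ?case using Suc.prems S by (simp add: Let_def)
qed

lemma base:
  assumes S: "is_shortest_path V E u1 u2 S" and w: "dwalk V E u1 u2 xs" and l: "length xs \<le> 2"
  shows "LX X (edges_of xs) \<le> LX X S"
proof (cases "length xs = 2")
  case False
  have "xs \<noteq> []" using w by (simp add: dwalk_iff)
  then have "length xs \<ge> 1" by (cases xs) auto
  then have "length xs = 1" using False l by linarith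
  then obtain x where "xs = [x]" by (cases xs) auto
  then show ?thesis using LX_nn by (simp add: LX_empty)
next
  case True
  then obtain x y where xs: "xs = [x, y]" by (auto simp: length_Suc_conv numeral_2_eq_2)
  then have xy: "x = u1" "y = u2" "(u1, u2) \<in> E" using w by (auto simp: dwalk_iff)
  have neq: "u1 \<noteq> u2"
  proof
    assume "u1 = u2"
    then have "(u1, u1) \<in> E\<^sup>+" using xy(3) by auto
    then show False using dag unfolding acyclic_def by blast
  qed
  have "is_path V E u1 u2 (edges_of xs)" using w unfolding is_path_def by blast
  then have cS: "card S \<le> 1" using S xs unfolding is_shortest_path_def by fastforce
  obtain ys where ys: "dwalk V E u1 u2 ys" "S = edges_of ys"
    using S unfolding is_shortest_path_def is_path_def by blast
  have "card S = length ys - 1" using ys walk_distinct[OF dag ys(1)] card_edges by simp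
  then have "length ys \<le> 2" using cS by simp
  moreover have "length ys \<noteq> 1"
  proof
    assume "length ys = 1"
    then obtain z where "ys = [z]" by (cases ys) auto
    then show False using ys(1) neq by (auto simp: dwalk_iff)
  qed
  moreover have "length ys \<noteq> 0" using ys(1) by (simp add: dwalk_iff)
  ultimately have "length ys = 2" by linarith
  then obtain x' y' where "ys = [x', y']" by (auto simp: length_Suc_conv numeral_2_eq_2)
  then have "ys = xs" using ys(1) xs xy by (simp add: dwalk_iff)
  then show ?thesis using ys by simp
qed

end


context alg begin

lemma main: "j \<le> i \<Longrightarrow> dwalk V E u1 u2 xs \<Longrightarrow> length xs \<le> a ^ j + 1 \<Longrightarrow>
  \<exists>R. RGa i u1 u2 X = Some R \<and> is_path V E u1 u2 R \<and> LX X (edges_of xs) \<le> (real j + 1) * LX X R"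
proof (induction i arbitrary: j u1 u2 X xs)
  case 0
  then have j: "j = 0" by simp
  have "is_path V E u1 u2 (edges_of xs)" using 0 unfolding is_path_def by blast
  then have "sp u1 u2 X 0 \<noteq> None" using sp_none by blast
  then obtain S where S: "sp u1 u2 X 0 = Some S" by auto
  have "LX X (edges_of xs) \<le> LX X S" using base[OF sp_some[OF S] 0(2)] 0(3) j by simp
  then show ?case using S sp_some[OF S] j by (auto simp: is_shortest_path_def)
next
  case (Suc i)
  note IH = Suc.IH and prems = Suc.prems
  have "is_path V E u1 u2 (edges_of xs)" using prems unfolding is_path_def by blast
  then have "sp u1 u2 X (Suc i) \<noteq> None" using sp_none by blast
  then obtain S where S: "sp u1 u2 X (Suc i) = Some S" by auto
  define g where "g = (\<lambda>vs. chain (\<lambda>w1 w2 Y. RGa i w1 w2 Y) (u1 # vs @ [u2]) X)"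
  define R where "R = fst (foldl (\<lambda>(best, r) vs. case g vs of None \<Rightarrow> (best, r)
       | Some Q \<Rightarrow> (if LX X Q > r then (Q, LX X Q) else (best, r))) (S, LX X S) tups)"
  have RG: "RGa (Suc i) u1 u2 X = Some R" using S unfolding R_def g_def by simp
  have pR: "is_path V E u1 u2 R" using RG_path[OF RG] .
  have fb: "LX X S \<le> LX X R \<and> (\<forall>vs\<in>set tups. \<forall>Q. g vs = Some Q \<longrightarrow> LX X Q \<le> LX X R)"
    using foldl_best[of "\<lambda>_. True" S tups g "LX X"] unfolding R_def by (simp add: Let_def)
  show ?case
  proof (cases "j = 0")
    case True
    have "LX X (edges_of xs) \<le> LX X S" using base[OF sp_some[OF S] prems(2)] prems(3) True by simp
    then show ?thesis using RG pR fb True by auto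
  next
    case False
    then obtain j' where js: "j = Suc j'" by (cases j) auto
    let ?b = "a ^ j'"
    have len: "length xs \<le> a * ?b + 1" using prems(3) js by simp
    have a1: "1 \<le> a" using a2 by simp
    obtain ws where ws: "spl V E ?b xs (u1 # ws)" "length ws = a"
      using spl_exists[OF a1 prems(2) len] by blast
    have hyp: "\<forall>Y v1 v2 ys. dwalk V E v1 v2 ys \<longrightarrow> length ys \<le> ?b + 1 \<longrightarrow>
      (\<exists>R. RGa i v1 v2 Y = Some R \<and> is_path V E v1 v2 R \<and> LX Y (edges_of ys) \<le> (real j' + 1) * LX Y R)"
    proof (intro allI impI)
      fix Y v1 v2 ys assume "dwalk V E v1 v2 ys" "length ys \<le> ?b + 1"
      then show "\<exists>R. RGa i v1 v2 Y = Some R \<and> is_path V E v1 v2 R \<and> LX Y (edges_of ys) \<le> (real j' + 1) * LX Y R"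
        using IH[of j' v1 v2 ys Y] prems(1) js by simp
    qed
    have hx: "hd xs = u1" "last xs = u2" using prems(2) by (auto simp: dwalk_iff)
    obtain Q where Q: "chain (RGa i) (u1 # ws) X = Some Q"
       "LX (X \<union> Q) (edges_of xs) \<le> (real j' + 1) * LX X Q"
      using chain_bound[OF ws(1) hyp, of X] by blast
    have sw: "set (u1 # ws) \<subseteq> V" "last (u1 # ws) = u2" using spl_hd[OF ws(1)] hx by auto
    have wsne: "ws \<noteq> []" using ws(2) a2 by auto
    define vs where "vs = butlast ws"
    have wsv: "ws = vs @ [u2]" using sw wsne unfolding vs_def by (metis append_butlast_last_id last.simps)
    have "length vs = a - 1" "set vs \<subseteq> V" using ws(2) sw unfolding vs_def
      by (auto dest: in_set_butlastD)
    then have vsT: "vs \<in> set tups" using tupsV by blast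
    have "g vs = Some Q" using Q(1) wsv unfolding g_def by simp
    then have QR: "LX X Q \<le> LX X R" using fb vsT by blast
    have m: "L (edges_of xs \<union> X) \<le> L (edges_of xs \<union> (X \<union> Q))" by (rule L_mono) blast
    have sq: "Q \<union> X = X \<union> Q" by blast
    have "LX X (edges_of xs) \<le> LX (X \<union> Q) (edges_of xs) + LX X Q"
      unfolding LX_eq sq using m by linarith
    also have "\<dots> \<le> (real j' + 1) * LX X Q + LX X Q" using Q(2) by linarith
    also have "\<dots> = (real j + 1) * LX X Q" using js by (simp add: algebra_simps)
    also have "\<dots> \<le> (real j + 1) * LX X R" using QR by (intro mult_left_mono) auto
    finally show ?thesis using RG pR by blast
  qed
qed

end

theorem theorem4:
  fixes V :: "'v set" and E :: "'v edge set" and C :: "'v edge \<Rightarrow> real" and \<gamma> :: real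
    and s t :: 'v and k :: nat and p :: "nat \<Rightarrow> 'v edge set" and lam :: "nat \<Rightarrow> real"
    and a :: nat and I :: nat and Estar :: "'v edge set" and d :: nat
    and sp :: "'v \<Rightarrow> 'v \<Rightarrow> 'v edge set \<Rightarrow> nat \<Rightarrow> 'v edge set option"
    and tups :: "'v list list"
  assumes finV: "finite V" and EV: "E \<subseteq> V \<times> V" and dag: "acyclic E"
    and Cnn: "\<forall>e\<in>E. 0 \<le> C e"
    and st: "s \<in> V" "t \<in> V" "s \<noteq> t" and conn: "\<exists>S. is_path V E s t S"
    and gam: "0 < \<gamma>" "\<forall>e\<in>E. \<gamma> \<le> C e"
    and users: "\<forall>i<k. \<exists>u v. is_path V E u v (p i)"
    and lamnn: "\<forall>i<k. 0 \<le> lam i"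
    and cap: "\<forall>e\<in>E. (\<Sum>i\<in>{i. i < k \<and> e \<in> p i}. lam i) \<le> C e"
    and disj: "\<forall>i<k. \<forall>j<k. i \<noteq> j \<longrightarrow> p i \<inter> p j = {}"
    and a2: "2 \<le> a"
    and sp_none: "\<And>u1 u2 X i. (sp u1 u2 X i = None) \<longleftrightarrow> \<not> (\<exists>S. is_path V E u1 u2 S)"
    and sp_some: "\<And>u1 u2 X i S. sp u1 u2 X i = Some S \<Longrightarrow> is_shortest_path V E u1 u2 S"
    and tups: "distinct tups" "set tups = {vs. length vs = a - 1 \<and> set vs \<subseteq> V}"
    and Estar: "is_path V E s t Estar"
      "\<forall>S. is_path V E s t S \<longrightarrow> Lam E C \<gamma> p lam k S \<le> Lam E C \<gamma> p lam k Estar"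
    and d: "d = card Estar"
    and I: "int I \<ge> \<lceil>log (real a) (real d)\<rceil>"
  shows "\<exists>Ef. RG sp tups (LamX E C \<gamma> p lam k) I s t {} = Some Ef \<and> is_path V E s t Ef \<and>
           Lam E C \<gamma> p lam k Ef \<ge>
             Lam E C \<gamma> p lam k Estar / (real_of_int \<lceil>log (real a) (real d)\<rceil> + 1)"
proof -
  interpret alg V E C \<gamma> k p lam a sp tups
  proof (unfold_locales)
    show "finite V" by (fact finV)
    show "E \<subseteq> V \<times> V" by (fact EV)
    show "0 < \<gamma>" by (fact gam(1))
    show "\<forall>e\<in>E. \<gamma> \<le> C e" by (fact gam(2))
    show "\<forall>i<k. \<exists>u v. is_path V E u v (p i)" by (fact users)
    show "\<forall>i<k. 0 \<le> lam i" by (fact lamnn)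
    show "\<forall>e\<in>E. (\<Sum>i\<in>{i. i < k \<and> e \<in> p i}. lam i) \<le> C e" by (fact cap)
    show "\<forall>i<k. \<forall>j<k. i \<noteq> j \<longrightarrow> p i \<inter> p j = {}" by (fact disj)
    show "acyclic E" by (fact dag)
    show "2 \<le> a" by (fact a2)
    show "\<And>u1 u2 X i. (sp u1 u2 X i = None) \<longleftrightarrow> \<not> (\<exists>S. is_path V E u1 u2 S)" by (fact sp_none)
    show "\<And>u1 u2 X i S. sp u1 u2 X i = Some S \<Longrightarrow> is_shortest_path V E u1 u2 S" by (fact sp_some)
    show "set tups = {vs. length vs = a - 1 \<and> set vs \<subseteq> V}" by (fact tups(2))
  qed
  obtain xs where xs: "dwalk V E s t xs" "Estar = edges_of xs"
    using Estar(1) unfolding is_path_def by blast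
  have dd: "d = length xs - 1" using d xs walk_distinct[OF dag xs(1)] card_edges by simp
  have "length xs \<noteq> 0" using xs(1) by (simp add: dwalk_iff)
  moreover have "length xs \<noteq> 1"
  proof
    assume "length xs = 1"
    then obtain z where "xs = [z]" by (cases xs) auto
    then show False using xs(1) st(3) by (auto simp: dwalk_iff)
  qed
  ultimately have d1: "1 \<le> d" using dd by linarith
  have a1: "1 < real a" using a2 by simp
  define n where "n = nat \<lceil>log (real a) (real d)\<rceil>"
  have n0: "0 \<le> log (real a) (real d)" using a1 d1 by simp
  have rn: "real n = real_of_int \<lceil>log (real a) (real d)\<rceil>" using n0 unfolding n_def by simp
  have "log (real a) (real d) \<le> real n" unfolding rn by (rule le_of_int_ceiling)
  then have "real d \<le> real a powr real n" using a1 d1 by (simp add: log_le_iff)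
  then have "real d \<le> real a ^ n" using a1 by (simp add: powr_realpow)
  then have "d \<le> a ^ n" by (metis of_nat_le_iff of_nat_power)
  then have len: "length xs \<le> a ^ n + 1" using dd by linarith
  have nI: "n \<le> I" using I n0 unfolding n_def by linarith
  obtain R where R: "RGa I s t {} = Some R" "is_path V E s t R"
    "LX {} (edges_of xs) \<le> (real n + 1) * LX {} R"
    using main[OF nI xs(1) len, of "{}"] by blast
  have lx: "\<And>A. LX {} A = L A" by (simp add: LX_eq L_empty)
  have "L Estar \<le> (real n + 1) * L R" using R(3) xs(2) by (simp add: lx)
  then have "L Estar / (real n + 1) \<le> L R" by (simp add: divide_le_eq mult.commute)
  then show ?thesis using R(1,2) rn by auto
qed


end
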